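(* Let $(S,\gamma)$ be a $C^\infty$ surface with boundary in $\mathbf{R}^3$. Suppose the dual-boundary $\widehat\gamma(t)$ is of type $(1,2,2+r)$ at $t=t_1$ for some positive integer $r$. Then the distance $d=\mathrm{dist}(\gamma(t_1),\widehat\gamma^*(t_1))$ is given by $$d=\left|\frac{\kappa_2\sqrt{\kappa_2^2+\kappa_3^2}}{\kappa_2(\kappa_3'+\kappa_1\kappa_2)+\kappa_3(-\kappa_2'+\kappa_1\kappa_3)}\right|$$ at $t=t_1$.
   Context: $S\subset\mathbf{R}^3$ is a co-oriented immersed $C^\infty$ surface with boundary curve $\gamma(t)$ parametrised by arc length; primes denote $d/dt$. Adapted frame: $\boldsymbol e_1=\gamma'$, $\boldsymbol e_3=\boldsymbol n$ the unit normal, $\boldsymbol e_2=\boldsymbol e_3\times\boldsymbol e_1$; $\kappa_1,\kappa_2,\kappa_3$ are defined by $\boldsymbol e_1'=\kappa_1\boldsymbol e_2+\kappa_2\boldsymbol e_3$, $\boldsymbol e_2'=-\kappa_1\boldsymbol e_1+\kappa_3\boldsymbol e_3$, $\boldsymbol e_3'=-\kappa_2\boldsymbol e_1-\kappa_3\boldsymbol e_2$. The dual-boundary is $\widehat\gamma(t)=[-\gamma(t)\cdot\boldsymbol n(t):\boldsymbol n(t)]\in\mathbf{R}P^{3*}$, the tangent plane $T_{\gamma(t)}S$ viewed in the dual projective space. Its type at $t_1$ is $(a_1,a_2,a_3)$ with $a_i=\min\{m:\mathrm{rank}(\widehat\gamma'(t_1),\dots,\widehat\gamma^{(m)}(t_1))=i\}$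 in affine coordinates. $\widehat\gamma^*(t_1)\in\mathbf{R}P^3$ is the osculating plane of $\widehat\gamma$ at $t_1$ viewed as a point of $\mathbf{R}P^3$; when it lies in $\mathbf{R}^3$ it is the point $x$ solving $x\cdot\boldsymbol n=\gamma\cdot\boldsymbol n$, $x\cdot\boldsymbol n'=(\gamma\cdot\boldsymbol n)'$, $x\cdot\boldsymbol n''=(\gamma\cdot\boldsymbol n)''$ at $t_1$. (If the denominator vanishes, $\widehat\gamma^*(t_1)$ is at infinity.) *)

theory Defs
  imports "HOL-Analysis.Analysis"
begin

fun vderivs :: "nat \<Rightarrow> (real \<Rightarrow> 'a::real_normed_vector) \<Rightarrow> real \<Rightarrow> 'a" where
  "vderivs 0 f = f"
| "vderivs (Suc k) f = (\<lambda>t. vector_derivative (vderivs k f) (at t))"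

definition smooth_on :: "real set \<Rightarrow> (real \<Rightarrow> 'a::real_normed_vector) \<Rightarrow> bool" where
  "smooth_on I f \<longleftrightarrow>
     (\<forall>k. \<forall>t\<in>I. (vderivs k f has_vector_derivative vderivs (Suc k) f t) (at t))"

(* homogeneous coordinates [-gamma.n : n] in R^4 of the dual-boundary (tangent plane) *)
definition dual_boundary_lift :: "(real \<Rightarrow> real^3) \<Rightarrow> (real \<Rightarrow> real^3) \<Rightarrow> real \<Rightarrow> real^4" where
  "dual_boundary_lift \<gamma> n t = vector [- (\<gamma> t \<bullet> n t), n t $ 1, n t $ 2, n t $ 3]"

(* affine coordinates of a projective curve with homogeneous lift V near t1: we use the standard
   affine chart {x_k = 1} of the first homogeneous coordinate k that is nonzero at t1;
   the affine curve is V/V_k, whose derivatives live in the hyperplane {x_k = 0} = R^3 *)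
definition affine_chart_index :: "(real \<Rightarrow> real^4) \<Rightarrow> real \<Rightarrow> 4" where
  "affine_chart_index V t1 = (SOME k. V t1 $ k \<noteq> 0)"

definition affine_curve :: "(real \<Rightarrow> real^4) \<Rightarrow> real \<Rightarrow> real \<Rightarrow> real^4" where
  "affine_curve V t1 = (\<lambda>t. (1 / V t $ affine_chart_index V t1) *\<^sub>R V t)"

definition affine_deriv_rank :: "(real \<Rightarrow> real^4) \<Rightarrow> real \<Rightarrow> nat \<Rightarrow> nat" where
  "affine_deriv_rank V t1 m =
     dim (span {vderivs j (affine_curve V t1) t1 | j. 1 \<le> j \<and> j \<le> m})"

definition is_type_index :: "(real \<Rightarrow> real^4) \<Rightarrow> real \<Rightarrow> nat \<Rightarrow> nat \<Rightarrow> bool" where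
  "is_type_index V t1 i a \<longleftrightarrow>
     1 \<le> a \<and> affine_deriv_rank V t1 a = i \<and>
     (\<forall>m. 1 \<le> m \<and> m < a \<longrightarrow> affine_deriv_rank V t1 m \<noteq> i)"

definition curve_type_at :: "(real \<Rightarrow> real^4) \<Rightarrow> real \<Rightarrow> nat \<times> nat \<times> nat \<Rightarrow> bool" where
  "curve_type_at V t1 a \<longleftrightarrow>
     (case a of (a1, a2, a3) \<Rightarrow>
        is_type_index V t1 1 a1 \<and> is_type_index V t1 2 a2 \<and> is_type_index V t1 3 a3)"

(* x is the (finite) point dual to the osculating plane of the dual-boundary at t1 *)
definition dual_osc_point :: "(real \<Rightarrow> real^3) \<Rightarrow> (real \<Rightarrow> real^3) \<Rightarrow> real \<Rightarrow> real^3 \<Rightarrow> bool" where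
  "dual_osc_point \<gamma> n t1 x \<longleftrightarrow>
     x \<bullet> n t1 = \<gamma> t1 \<bullet> n t1 \<and>
     x \<bullet> vderivs 1 n t1 = vderivs 1 (\<lambda>t. \<gamma> t \<bullet> n t) t1 \<and>
     x \<bullet> vderivs 2 n t1 = vderivs 2 (\<lambda>t. \<gamma> t \<bullet> n t) t1"

end

theory Submission
  imports Defs
begin

lemma hvd_inner:
  fixes f g :: "real \<Rightarrow> 'a::real_inner"
  assumes "(f has_vector_derivative f') (at t)" "(g has_vector_derivative g') (at t)"
  shows "((\<lambda>t. f t \<bullet> g t) has_vector_derivative (f t \<bullet> g' + f' \<bullet> g t)) (at t)"
  by (rule bounded_bilinear.has_vector_derivative[OF bounded_bilinear_inner assms])

lemma expand3:
  fixes E1 E2 E3 v :: "real^3"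
  assumes o: "E1 \<bullet> E1 = 1" "E2 \<bullet> E2 = 1" "E3 \<bullet> E3 = 1" "E1 \<bullet> E2 = 0" "E1 \<bullet> E3 = 0" "E2 \<bullet> E3 = 0"
  shows "v = (v \<bullet> E1) *\<^sub>R E1 + (v \<bullet> E2) *\<^sub>R E2 + (v \<bullet> E3) *\<^sub>R E3"
proof -
  let ?B = "{E1, E2, E3}"
  have d: "E1 \<noteq> E2" "E1 \<noteq> E3" "E2 \<noteq> E3" using o by auto
  have po: "pairwise orthogonal ?B" using o
    by (auto simp: pairwise_def orthogonal_def inner_commute)
  have z: "0 \<notin> ?B" using o by auto
  have ind: "independent ?B" by (rule pairwise_orthogonal_independent[OF po z])
  have c: "card ?B = 3" using d by auto
  have "dim (UNIV :: (real^3) set) \<le> card ?B" using c by simp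
  then have sp: "UNIV \<subseteq> span ?B" using card_ge_dim_independent[OF _ ind] by blast
  define z where "z = v - ((v \<bullet> E1) *\<^sub>R E1 + (v \<bullet> E2) *\<^sub>R E2 + (v \<bullet> E3) *\<^sub>R E3)"
  have o2: "E2 \<bullet> E1 = 0" "E3 \<bullet> E1 = 0" "E3 \<bullet> E2 = 0" using o by (auto simp: inner_commute)
  have "\<And>y. y \<in> ?B \<Longrightarrow> orthogonal z y" using o o2
    by (auto simp: z_def orthogonal_def inner_diff_left inner_add_left inner_diff_right inner_add_right)
  then have "orthogonal z z" using orthogonal_to_span sp by blast
  then have "z = 0" by (simp add: orthogonal_def)
  then show ?thesis by (simp add: z_def)
qed

theorem proposition3p6:
  fixes I :: "real set" and t1 :: real and r :: nat
    and \<gamma> e1 e2 e3 :: "real \<Rightarrow> real^3"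
    and \<kappa>1 \<kappa>2 \<kappa>3 :: "real \<Rightarrow> real"
    and x :: "real^3"
  assumes I: "open I" "t1 \<in> I"
    and smooth: "smooth_on I \<gamma>" "smooth_on I e3"
    and arclength: "\<forall>t\<in>I. (\<gamma> has_vector_derivative e1 t) (at t) \<and> norm (e1 t) = 1"
    and normal: "\<forall>t\<in>I. norm (e3 t) = 1 \<and> e3 t \<bullet> e1 t = 0"
    and e2def: "\<forall>t\<in>I. e2 t = cross3 (e3 t) (e1 t)"
    and frame1: "\<forall>t\<in>I. (e1 has_vector_derivative (\<kappa>1 t *\<^sub>R e2 t + \<kappa>2 t *\<^sub>R e3 t)) (at t)"
    and frame2: "\<forall>t\<in>I. (e2 has_vector_derivative (- \<kappa>1 t *\<^sub>R e1 t + \<kappa>3 t *\<^sub>R e3 t)) (at t)"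
    and frame3: "\<forall>t\<in>I. (e3 has_vector_derivative (- \<kappa>2 t *\<^sub>R e1 t - \<kappa>3 t *\<^sub>R e2 t)) (at t)"
    and r: "0 < r"
    and type: "curve_type_at (dual_boundary_lift \<gamma> e3) t1 (1, 2, 2 + r)"
    and x: "dual_osc_point \<gamma> e3 t1 x"
  shows "dist (\<gamma> t1) x =
    \<bar>\<kappa>2 t1 * sqrt ((\<kappa>2 t1)\<^sup>2 + (\<kappa>3 t1)\<^sup>2) /
      (\<kappa>2 t1 * (deriv \<kappa>3 t1 + \<kappa>1 t1 * \<kappa>2 t1)
       + \<kappa>3 t1 * (- deriv \<kappa>2 t1 + \<kappa>1 t1 * \<kappa>3 t1))\<bar>"
proof -
  define n1 where "n1 = vderivs 1 e3"
  define N2 where "N2 = vderivs 2 e3 t1"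
  define E1 where "E1 = e1 t1"
  define E2 where "E2 = e2 t1"
  define E3 where "E3 = e3 t1"
  define g where "g = \<gamma> t1"
  define k1 where "k1 = \<kappa>1 t1"
  define k2 where "k2 = \<kappa>2 t1"
  define k3 where "k3 = \<kappa>3 t1"
  define N1 where "N1 = n1 t1"
  have orth: "e1 t \<bullet> e1 t = 1 \<and> e2 t \<bullet> e2 t = 1 \<and> e3 t \<bullet> e3 t = 1 \<and> e1 t \<bullet> e2 t = 0
     \<and> e1 t \<bullet> e3 t = 0 \<and> e2 t \<bullet> e3 t = 0 \<and> e2 t \<bullet> e1 t = 0 \<and> e3 t \<bullet> e1 t = 0 \<and> e3 t \<bullet> e2 t = 0"
    if t: "t \<in> I" for t
  proof -
    have a: "norm (e1 t) = 1" "norm (e3 t) = 1" "e3 t \<bullet> e1 t = 0" using arclength normal t by auto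
    have b: "e2 t = cross3 (e3 t) (e1 t)" using e2def t by auto
    have c: "e2 t \<bullet> e1 t = 0" "e2 t \<bullet> e3 t = 0" unfolding b by (simp_all add: dot_cross_self)
    have "(norm (e2 t))\<^sup>2 = 1" using norm_cross_dot[of "e3 t" "e1 t"] a b by simp
    then have "e2 t \<bullet> e2 t = 1" by (simp add: power2_norm_eq_inner)
    moreover have "e1 t \<bullet> e1 t = 1" "e3 t \<bullet> e3 t = 1" using a by (simp_all add: dot_square_norm)
    ultimately show ?thesis using a c by (simp add: inner_commute)
  qed
  have n1eq: "n1 t = - \<kappa>2 t *\<^sub>R e1 t - \<kappa>3 t *\<^sub>R e2 t" and d3: "(e3 has_vector_derivative n1 t) (at t)"
    if t: "t \<in> I" for t
  proof -
    have "(vderivs 0 e3 has_vector_derivative vderivs (Suc 0) e3 t) (at t)"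
      using smooth(2) t unfolding smooth_on_def by blast
    then show d: "(e3 has_vector_derivative n1 t) (at t)" by (simp add: n1_def)
    show "n1 t = - \<kappa>2 t *\<^sub>R e1 t - \<kappa>3 t *\<^sub>R e2 t"
      using vector_derivative_unique_at[OF d] frame3 t by blast
  qed
  have dn1: "(n1 has_vector_derivative N2) (at t1)"
  proof -
    have "(vderivs (Suc 0) e3 has_vector_derivative vderivs (Suc (Suc 0)) e3 t1) (at t1)"
      using smooth(2) I unfolding smooth_on_def by blast
    then show ?thesis by (simp add: n1_def N2_def numeral_2_eq_2)
  qed
  have oE: "E1 \<bullet> E1 = 1" "E2 \<bullet> E2 = 1" "E3 \<bullet> E3 = 1" "E1 \<bullet> E2 = 0" "E1 \<bullet> E3 = 0" "E2 \<bullet> E3 = 0"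
     "E2 \<bullet> E1 = 0" "E3 \<bullet> E1 = 0" "E3 \<bullet> E2 = 0"
    using orth[OF I(2)] by (auto simp: E1_def E2_def E3_def)
  have N1eq: "N1 = - k2 *\<^sub>R E1 - k3 *\<^sub>R E2" using n1eq[OF I(2)] by (simp add: N1_def k2_def k3_def E1_def E2_def)
  have de1: "(e1 has_vector_derivative (k1 *\<^sub>R E2 + k2 *\<^sub>R E3)) (at t1)"
    using frame1 I by (simp add: k1_def k2_def E2_def E3_def)
  have de2: "(e2 has_vector_derivative (- k1 *\<^sub>R E1 + k3 *\<^sub>R E3)) (at t1)"
    using frame2 I by (simp add: k1_def k3_def E1_def E3_def)
  have dk2: "deriv \<kappa>2 t1 = k1 * k3 - N2 \<bullet> E1"
  proof -
    have "((\<lambda>t. - (n1 t \<bullet> e1 t)) has_vector_derivative - (N1 \<bullet> (k1 *\<^sub>R E2 + k2 *\<^sub>R E3) + N2 \<bullet> E1)) (at t1)"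
      using has_vector_derivative_minus[OF hvd_inner[OF dn1 de1]] by (simp add: N1_def E1_def)
    also have "- (N1 \<bullet> (k1 *\<^sub>R E2 + k2 *\<^sub>R E3) + N2 \<bullet> E1) = k1 * k3 - N2 \<bullet> E1"
      using oE by (simp add: N1eq inner_diff_left inner_add_right algebra_simps)
    finally have h: "((\<lambda>t. - (n1 t \<bullet> e1 t)) has_real_derivative (k1 * k3 - N2 \<bullet> E1)) (at t1)"
      by (simp add: has_real_derivative_iff_has_vector_derivative)
    have "\<kappa>2 t = - (n1 t \<bullet> e1 t)" if "t \<in> I" for t
      using orth[OF that] by (simp add: n1eq[OF that] inner_diff_left)
    then have "(\<kappa>2 has_real_derivative (k1 * k3 - N2 \<bullet> E1)) (at t1)"
      using has_field_derivative_transform_within_open[OF h I(1) I(2)] by metis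
    then show ?thesis by (rule DERIV_imp_deriv)
  qed
  have dk3: "deriv \<kappa>3 t1 = - k1 * k2 - N2 \<bullet> E2"
  proof -
    have "((\<lambda>t. - (n1 t \<bullet> e2 t)) has_vector_derivative - (N1 \<bullet> (- k1 *\<^sub>R E1 + k3 *\<^sub>R E3) + N2 \<bullet> E2)) (at t1)"
      using has_vector_derivative_minus[OF hvd_inner[OF dn1 de2]] by (simp add: N1_def E2_def)
    also have "- (N1 \<bullet> (- k1 *\<^sub>R E1 + k3 *\<^sub>R E3) + N2 \<bullet> E2) = - k1 * k2 - N2 \<bullet> E2"
      using oE by (simp add: N1eq inner_diff_left inner_add_right algebra_simps)
    finally have h: "((\<lambda>t. - (n1 t \<bullet> e2 t)) has_real_derivative (- k1 * k2 - N2 \<bullet> E2)) (at t1)"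
      by (simp add: has_real_derivative_iff_has_vector_derivative)
    have "\<kappa>3 t = - (n1 t \<bullet> e2 t)" if "t \<in> I" for t
      using orth[OF that] by (simp add: n1eq[OF that] inner_diff_left)
    then have "(\<kappa>3 has_real_derivative (- k1 * k2 - N2 \<bullet> E2)) (at t1)"
      using has_field_derivative_transform_within_open[OF h I(1) I(2)] by metis
    then show ?thesis by (rule DERIV_imp_deriv)
  qed
  define F where "F = (\<lambda>t. \<gamma> t \<bullet> e3 t)"
  have dF: "(F has_vector_derivative (\<gamma> t \<bullet> n1 t)) (at t)" if t: "t \<in> I" for t
  proof -
    have "(F has_vector_derivative (\<gamma> t \<bullet> n1 t + e1 t \<bullet> e3 t)) (at t)"
      unfolding F_def using hvd_inner[OF conjunct1[OF arclength[rule_format, OF t]] d3[OF t]] .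
    then show ?thesis using orth[OF t] by simp
  qed
  have dg: "(\<gamma> has_vector_derivative E1) (at t1)" using arclength I by (simp add: E1_def)
  have F1: "vderivs 1 F t = \<gamma> t \<bullet> n1 t" if "t \<in> I" for t
    using vector_derivative_at[OF dF[OF that]] by simp
  have F2: "vderivs 2 F t1 = g \<bullet> N2 - k2"
  proof -
    have h: "((\<lambda>t. \<gamma> t \<bullet> n1 t) has_vector_derivative (g \<bullet> N2 + E1 \<bullet> N1)) (at t1)"
      using hvd_inner[OF dg dn1] by (simp add: g_def N1_def)
    have "(vderivs 1 F has_vector_derivative (g \<bullet> N2 + E1 \<bullet> N1)) (at t1)"
      by (rule has_vector_derivative_transform_within_open[OF h I]) (simp add: vector_derivative_at[OF dF])
    then have "vderivs 2 F t1 = g \<bullet> N2 + E1 \<bullet> N1"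
      using vector_derivative_at by (simp add: numeral_2_eq_2)
    then show ?thesis using oE by (simp add: N1eq inner_diff_right)
  qed
  have xe: "x \<bullet> E3 = g \<bullet> E3" "x \<bullet> N1 = g \<bullet> N1" "x \<bullet> N2 = g \<bullet> N2 - k2"
    using x F1[OF I(2)] F2 unfolding dual_osc_point_def F_def
    by (simp_all add: E3_def g_def N1_def n1_def N2_def)
  define y where "y = x - g"
  define a where "a = y \<bullet> E1"
  define b where "b = y \<bullet> E2"
  define A where "A = N2 \<bullet> E1"
  define B where "B = N2 \<bullet> E2"
  have y3: "y \<bullet> E3 = 0" using xe by (simp add: y_def inner_diff_left)
  have yexp: "y = a *\<^sub>R E1 + b *\<^sub>R E2"
    using expand3[OF oE(1-6), of y] y3 by (simp add: a_def b_def)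
  have eq1: "- k2 * a - k3 * b = 0"
  proof -
    have "y \<bullet> N1 = 0" using xe by (simp add: y_def inner_diff_left)
    then show ?thesis using oE by (simp add: yexp N1eq inner_add_left inner_diff_right algebra_simps)
  qed
  have eq2: "a * A + b * B = - k2"
  proof -
    have "y \<bullet> N2 = - k2" using xe by (simp add: y_def inner_diff_left)
    then show ?thesis by (simp add: yexp A_def B_def inner_add_left inner_add_right inner_commute)
  qed
  have ny: "(norm y)\<^sup>2 = a\<^sup>2 + b\<^sup>2"
  proof -
    have "(norm y)\<^sup>2 = y \<bullet> y" by (simp add: power2_norm_eq_inner)
    also have "\<dots> = a\<^sup>2 + b\<^sup>2" using oE
      by (subst (1 2) yexp) (simp add: inner_add_left inner_add_right power2_eq_square)
    finally show ?thesis .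
  qed
  define D where "D = k2 * (deriv \<kappa>3 t1 + k1 * k2) + k3 * (- deriv \<kappa>2 t1 + k1 * k3)"
  have DAB: "D = - k2 * B + k3 * A" by (simp add: D_def dk2 dk3 A_def B_def algebra_simps)
  have aD: "a * D = - k2 * k3" and bD: "b * D = k2\<^sup>2"
    using eq1 eq2 unfolding DAB power2_eq_square by algebra+
  have D0: "D \<noteq> 0"
  proof
    assume D: "D = 0"
    have k2z: "k2 = 0" using bD D by simp
    have cases: "k3 = 0 \<or> A = 0" using D DAB k2z by simp
    define emb :: "real^3 \<Rightarrow> real^4" where "emb = (\<lambda>u. vector [0, u$1, u$2, u$3])"
    define ax :: "real^4" where "ax = vector [1,0,0,0]"
    have v4: "(vector [a,b,c,d] :: real^4)$1 = a" "(vector [a,b,c,d] :: real^4)$2 = b"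
      "(vector [a,b,c,d] :: real^4)$3 = c" "(vector [a,b,c,d] :: real^4)$4 = d" for a b c d :: real
      by (simp_all add: vector_def)
    have lemb: "linear emb"
      by (rule linearI) (simp_all add: emb_def vec_eq_iff forall_4 v4)
    have blemb: "bounded_linear emb" using lemb linear_conv_bounded_linear by blast
    define Lg where "Lg = (\<lambda>u. emb u - (g \<bullet> u) *\<^sub>R ax)"
    have lLg: "linear Lg"
      by (rule linearI) (simp_all add: Lg_def linear_add[OF lemb] linear_scale[OF lemb] inner_add_right algebra_simps)
    define V where "V = dual_boundary_lift \<gamma> e3"
    have Veq: "V = (\<lambda>t. emb (e3 t) - F t *\<^sub>R ax)"
      by (rule ext) (simp add: V_def dual_boundary_lift_def emb_def ax_def F_def vec_eq_iff forall_4 v4)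
    define V1 where "V1 = (\<lambda>t. emb (n1 t) - (\<gamma> t \<bullet> n1 t) *\<^sub>R ax)"
    define V2 where "V2 = Lg N2"
    have dV: "(V has_vector_derivative V1 t) (at t)" if t: "t \<in> I" for t
    proof -
      have a: "((\<lambda>t. emb (e3 t)) has_vector_derivative emb (n1 t)) (at t)"
        by (rule bounded_linear.has_vector_derivative[OF blemb d3[OF t]])
      have "(F has_real_derivative (\<gamma> t \<bullet> n1 t)) (at t)"
        using dF[OF t] by (simp add: has_real_derivative_iff_has_vector_derivative)
      from has_vector_derivative_scaleR[OF this has_vector_derivative_const[of ax]]
      have b: "((\<lambda>t. F t *\<^sub>R ax) has_vector_derivative (\<gamma> t \<bullet> n1 t) *\<^sub>R ax) (at t)" by simp
      show ?thesis unfolding Veq V1_def by (rule has_vector_derivative_diff[OF a b])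
    qed
    have dV1: "(V1 has_vector_derivative V2) (at t1)"
    proof -
      have a: "((\<lambda>t. emb (n1 t)) has_vector_derivative emb N2) (at t1)"
        by (rule bounded_linear.has_vector_derivative[OF blemb dn1])
      have "((\<lambda>t. \<gamma> t \<bullet> n1 t) has_real_derivative (g \<bullet> N2 + E1 \<bullet> N1)) (at t1)"
        using hvd_inner[OF dg dn1] by (simp add: g_def N1_def has_real_derivative_iff_has_vector_derivative)
      moreover have "E1 \<bullet> N1 = 0" using oE k2z by (simp add: N1eq inner_diff_right)
      ultimately have "((\<lambda>t. \<gamma> t \<bullet> n1 t) has_real_derivative (g \<bullet> N2)) (at t1)" by simp
      from has_vector_derivative_scaleR[OF this has_vector_derivative_const[of ax]]
      have b: "((\<lambda>t. (\<gamma> t \<bullet> n1 t) *\<^sub>R ax) has_vector_derivative (g \<bullet> N2) *\<^sub>R ax) (at t1)" by simp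
      show ?thesis unfolding V1_def V2_def Lg_def by (rule has_vector_derivative_diff[OF a b])
    qed
    have VL: "V t1 = Lg E3" "V1 t1 = Lg N1"
      by (simp_all add: Veq V1_def Lg_def F_def E3_def g_def N1_def)
    have ex: "\<exists>k. V t1 $ k \<noteq> 0"
    proof (rule ccontr)
      assume "\<not> ?thesis"
      then have z: "V t1 $ 2 = 0" "V t1 $ 3 = 0" "V t1 $ 4 = 0" by auto
      then have "E3 = 0" using z by (simp add: VL Lg_def emb_def ax_def v4 vec_eq_iff forall_3)
      then show False using oE by simp
    qed
    define k where "k = affine_chart_index V t1"
    have hk: "V t1 $ k \<noteq> 0" unfolding k_def affine_chart_index_def using someI_ex[OF ex] .
    define h where "h = (\<lambda>t. V t $ k)"
    define h1 where "h1 = (\<lambda>t. V1 t $ k)"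
    have dh: "(h has_real_derivative h1 t) (at t)" if "t \<in> I" for t
      using bounded_linear.has_vector_derivative[OF bounded_linear_vec_nth dV[OF that], of k]
      by (simp add: h_def h1_def has_real_derivative_iff_has_vector_derivative)
    have dh1: "(h1 has_real_derivative V2 $ k) (at t1)"
      using bounded_linear.has_vector_derivative[OF bounded_linear_vec_nth dV1, of k]
      by (simp add: h1_def has_real_derivative_iff_has_vector_derivative)
    define U where "U = I \<inter> h -` (- {0})"
    have cI: "continuous_on I h"
      using dh by (meson DERIV_isCont I(1) continuous_on_eq_continuous_at)
    have oU: "open U" unfolding U_def by (rule continuous_open_preimage[OF cI I(1)]) auto
    have t1U: "t1 \<in> U" using hk I by (simp add: U_def h_def)
    have UI: "U \<subseteq> I" by (auto simp: U_def)
    have hnz: "h t \<noteq> 0" if "t \<in> U" for t using that by (auto simp: U_def)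
    define W where "W = affine_curve V t1"
    have Weq: "W = (\<lambda>t. inverse (h t) *\<^sub>R V t)"
      by (simp add: W_def affine_curve_def h_def k_def inverse_eq_divide)
    define c where "c = (\<lambda>t. - (h1 t * inverse (h t ^ Suc (Suc 0))))"
    define W1 where "W1 = (\<lambda>t. inverse (h t) *\<^sub>R V1 t + c t *\<^sub>R V t)"
    have dinv: "((\<lambda>t. inverse (h t)) has_real_derivative c t) (at t)" if "t \<in> U" for t
      unfolding c_def using DERIV_inverse_fun[OF dh hnz[OF that]] that UI by blast
    have dW: "(W has_vector_derivative W1 t) (at t)" if "t \<in> U" for t
      unfolding Weq W1_def using has_vector_derivative_scaleR[OF dinv[OF that] dV] that UI by blast
    have W1v: "vderivs 1 W t = W1 t" if "t \<in> U" for t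
      using vector_derivative_at[OF dW[OF that]] by simp
    obtain c' where dc: "(c has_real_derivative c') (at t1)"
      unfolding c_def
      using DERIV_minus[OF DERIV_mult[OF dh1 DERIV_inverse_fun[OF DERIV_power[OF dh[OF I(2)]]]]] hk
      by (fastforce simp: h_def)
    define W2 where "W2 = (inverse (h t1) *\<^sub>R V2 + c t1 *\<^sub>R V1 t1) + (c t1 *\<^sub>R V1 t1 + c' *\<^sub>R V t1)"
    have dW1: "(W1 has_vector_derivative W2) (at t1)"
      unfolding W1_def W2_def
      by (rule has_vector_derivative_add[OF has_vector_derivative_scaleR[OF dinv[OF t1U] dV1]
            has_vector_derivative_scaleR[OF dc dV[OF I(2)]]])
    have W2v: "vderivs 2 W t1 = W2"
    proof -
      have "(vderivs 1 W has_vector_derivative W2) (at t1)"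
        by (rule has_vector_derivative_transform_within_open[OF dW1 oU t1U]) (simp add: vector_derivative_at[OF dW])
      then show ?thesis using vector_derivative_at by (simp add: numeral_2_eq_2)
    qed
    have W1k: "W1 t $ k = 0" if "t \<in> U" for t
    proof -
      have "W1 t $ k = inverse (h t) * h1 t + c t * h t" by (simp add: W1_def h_def h1_def)
      also have "\<dots> = 0" using hnz[OF that] unfolding c_def
        by (simp add: power2_eq_square divide_simps)
      finally show ?thesis .
    qed
    have W2k: "W2 $ k = 0"
    proof -
      have a: "((\<lambda>t. W1 t $ k) has_vector_derivative W2 $ k) (at t1)"
        using bounded_linear.has_vector_derivative[OF bounded_linear_vec_nth dW1, of k] by simp
      have "((\<lambda>t. W1 t $ k) has_vector_derivative 0) (at t1)"
        by (rule has_vector_derivative_transform_within_open[OF has_vector_derivative_const oU t1U])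
           (simp add: W1k)
      then show ?thesis using vector_derivative_unique_at[OF a] by simp
    qed
    have rank: "dim {W1 t1, W2} = 2"
    proof -
      have "is_type_index V t1 2 2"
        using type unfolding V_def curve_type_at_def by simp
      then have r2: "affine_deriv_rank V t1 2 = 2" unfolding is_type_index_def by blast
      have se: "{vderivs j W t1 | j. 1 \<le> j \<and> j \<le> 2} = {vderivs 1 W t1, vderivs 2 W t1}"
      proof (intro set_eqI iffI)
        fix v assume "v \<in> {vderivs j W t1 | j. 1 \<le> j \<and> j \<le> 2}"
        then obtain j where j: "v = vderivs j W t1" "1 \<le> j" "j \<le> 2" by blast
        then have "j = 1 \<or> j = 2" by arith
        then show "v \<in> {vderivs 1 W t1, vderivs 2 W t1}" using j(1) by blast
      next
        fix v assume "v \<in> {vderivs 1 W t1, vderivs 2 W t1}"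
        then have "v = vderivs 1 W t1 \<or> v = vderivs 2 W t1" by blast
        then show "v \<in> {vderivs j W t1 | j. 1 \<le> j \<and> j \<le> 2}"
        proof
          assume "v = vderivs 1 W t1" then show ?thesis by (intro CollectI exI[of _ 1]) simp
        next
          assume "v = vderivs 2 W t1" then show ?thesis by (intro CollectI exI[of _ 2]) simp
        qed
      qed
      have "dim (span {vderivs 1 W t1, vderivs 2 W t1}) = 2"
        using r2 se unfolding affine_deriv_rank_def W_def by simp
      then show ?thesis using W1v[OF t1U] W2v by simp
    qed
    have notin: "V t1 \<notin> span {W1 t1, W2}"
    proof
      assume "V t1 \<in> span {W1 t1, W2}"
      then obtain \<alpha> where "V t1 - \<alpha> *\<^sub>R W1 t1 \<in> span {W2}"
        unfolding span_insert[of "W1 t1" "{W2}"] by blast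
      then obtain \<beta> where "V t1 - \<alpha> *\<^sub>R W1 t1 = \<beta> *\<^sub>R W2"
        unfolding span_singleton by blast
      then have "(V t1 - \<alpha> *\<^sub>R W1 t1) $ k = (\<beta> *\<^sub>R W2) $ k" by simp
      then have "V t1 $ k = 0" using W1k[OF t1U] W2k by simp
      then show False using hk by simp
    qed
    have dim3: "dim (insert (V t1) {W1 t1, W2}) = 3" using notin rank by (simp add: dim_insert)
    have key: False if P: "V t1 \<in> span {P, Q}" "V1 t1 \<in> span {P, Q}" "V2 \<in> span {P, Q}" for P Q
    proof -
      have "insert (V t1) {W1 t1, W2} \<subseteq> span {P, Q}"
      proof -
        have "W1 t1 \<in> span {P, Q}" unfolding W1_def by (intro span_add span_scale P)
        moreover have "W2 \<in> span {P, Q}" unfolding W2_def by (intro span_add span_scale P)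
        ultimately show ?thesis using P by blast
      qed
      then have "dim (insert (V t1) {W1 t1, W2}) \<le> card {P, Q}" by (rule dim_le_card) simp
      also have "card {P, Q} \<le> 2" by (simp add: card_insert_if)
      finally show False using dim3 by simp
    qed
    from cases show False
    proof
      assume "k3 = 0"
      then have "N1 = 0" using k2z by (simp add: N1eq)
      then have "V1 t1 = 0" using VL(2) linear_0[OF lLg] by simp
      moreover have "V t1 \<in> span {V t1, V2}" "V2 \<in> span {V t1, V2}" by (auto intro: span_base)
      ultimately show False using key[of "V t1" V2] span_zero by metis
    next
      assume A0: "A = 0"
      have N2e: "N2 = B *\<^sub>R E2 + (N2 \<bullet> E3) *\<^sub>R E3"
        using expand3[OF oE(1-6), of N2] A0 by (simp add: A_def B_def)
      have P: "Lg E2 \<in> span {Lg E2, Lg E3}" "Lg E3 \<in> span {Lg E2, Lg E3}" by (auto intro: span_base)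
      have "V1 t1 = (- k3) *\<^sub>R Lg E2" using VL(2) k2z
        by (simp add: N1eq linear_scale[OF lLg] linear_neg[OF lLg])
      then have a: "V1 t1 \<in> span {Lg E2, Lg E3}" using P span_scale by metis
      have "V2 = B *\<^sub>R Lg E2 + (N2 \<bullet> E3) *\<^sub>R Lg E3"
        unfolding V2_def by (subst N2e) (simp add: linear_add[OF lLg] linear_scale[OF lLg])
      then have b: "V2 \<in> span {Lg E2, Lg E3}" using P span_scale span_add by metis
      show False using key[OF _ a b] P VL(1) by simp
    qed
  qed
  have "(norm y)\<^sup>2 = (k2 * sqrt (k2\<^sup>2 + k3\<^sup>2) / D)\<^sup>2"
  proof -
    have a': "a = - k2 * k3 / D" and b': "b = k2\<^sup>2 / D" using aD bD D0 by (simp_all add: field_simps)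
    show ?thesis unfolding ny a' b' using D0
      by (simp add: power_divide power_mult_distrib field_simps power2_eq_square)
  qed
  then have "norm y = \<bar>k2 * sqrt (k2\<^sup>2 + k3\<^sup>2) / D\<bar>"
    by (metis norm_ge_zero power2_abs abs_of_nonneg power2_eq_iff_nonneg abs_ge_zero)
  moreover have "dist (\<gamma> t1) x = norm y" by (simp add: y_def g_def dist_norm norm_minus_commute)
  ultimately show ?thesis by (simp add: D_def k1_def k2_def k3_def)
qed

end
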